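(* Let $N\ge 2$, $1\le Q<N$, $P\in\mathbb{C}^{N\times Q}$, let $x=(x_1,\dots,x_N)^T\in\mathbb{C}^N$ with $x_2,\dots,x_{Q+1}$ nonzero, $X=\mathrm{diag}(x)$, and let $S\in\mathbb{C}^{Q\times Q}$ be invertible with entries $S_{mq}$. Let $\mathcal{J}=\{1,\dots,N\}\cup\bigcup_{m=2}^{Q}\{(m-1)N+1,\dots,(m-1)N+Q+1\}$ and let $\tilde P=P_{\{1,\dots,Q+1\},:}$. Then $$\Big|\det\big[\,[I_Q\otimes XP]_{\mathcal{J},:}\ \ [(S\otimes I_N)D(P)]_{\mathcal{J},\{2,\dots,N\}}\,\big]\Big| =\prod_{j=Q+2}^{N}\Big|\sum_{q=1}^{Q}S_{1q}P_{jq}\Big|\ \prod_{k=1}^{5}|\det M_k|,$$ where $\tilde X=\mathrm{diag}(x_1,\dots,x_{Q+1})$ and $M_1=I_Q\otimes\tilde X$, $M_2=S\otimes I_{Q+1}$, $M_3=\big[\,I_Q\otimes\tilde P\ \ [D(\tilde P)]_{:,\{2,\dots,Q+1\}}\,\big]$, $M_4=\begin{bmatrix}S^{-1}\otimes I_Q&0\\0&I_Q\end{bmatrix}$, $M_5=\begin{bmatrix}I_{Q^2}&0\\0&\mathrm{diag}(x_2,\dots,x_{Q+1})^{-1}\end{bmatrix}$.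
   Context: For a $K\times L$ matrix $B$ with entries $b_{ij}$, $D(B)$ denotes the $KL\times K$ matrix obtained by stacking vertically $\mathrm{diag}(b_{11},\dots,b_{K1}),\dots,\mathrm{diag}(b_{1L},\dots,b_{KL})$. For a matrix $B$ and index sets $\mathcal{I},\mathcal{S}$, $[B]_{\mathcal{I},\mathcal{S}}$ is the submatrix with rows in $\mathcal{I}$ and columns in $\mathcal{S}$; ":" means all rows/columns. $\otimes$ is the Kronecker product, with ordinary matrix products taking precedence over it (e.g. $I_Q\otimes XP=I_Q\otimes(XP)$). The matrix on the left is square of size $N-1+Q^2$. *)

theory Defs
  imports "Jordan_Normal_Form.DL_Submatrix" "Jordan_Normal_Form.Determinant"
begin

text \<open>All matrices are 0-indexed Jordan_Normal_Form matrices; the paper's 1-based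
indices are shifted by one.\<close>

definition kron :: "'a::times mat \<Rightarrow> 'a mat \<Rightarrow> 'a mat" where
  "kron A B = mat (dim_row A * dim_row B) (dim_col A * dim_col B)
     (\<lambda>(i,j). A $$ (i div dim_row B, j div dim_col B) * B $$ (i mod dim_row B, j mod dim_col B))"

definition diagm :: "nat \<Rightarrow> (nat \<Rightarrow> 'a::zero) \<Rightarrow> 'a mat" where
  "diagm n d = mat n n (\<lambda>(i,j). if i = j then d i else 0)"

text \<open>D(B): for K x L matrix B, the KL x K matrix stacking diag(b_{1l},...,b_{Kl}), l = 1..L.\<close>
definition Dmat :: "'a::zero mat \<Rightarrow> 'a mat" where
  "Dmat B = mat (dim_row B * dim_col B) (dim_row B)
     (\<lambda>(r,j). if r mod dim_row B = j then B $$ (j, r div dim_row B) else 0)"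

definition hcat :: "'a::zero mat \<Rightarrow> 'a mat \<Rightarrow> 'a mat" where
  "hcat A B = mat (dim_row A) (dim_col A + dim_col B)
     (\<lambda>(i,j). if j < dim_col A then A $$ (i,j) else B $$ (i, j - dim_col A))"

definition bdiag :: "'a::zero mat \<Rightarrow> 'a mat \<Rightarrow> 'a mat" where
  "bdiag A B = four_block_mat A (0\<^sub>m (dim_row A) (dim_col B)) (0\<^sub>m (dim_row B) (dim_col A)) B"

definition mat_inv :: "'a::semiring_1 mat \<Rightarrow> 'a mat" where
  "mat_inv A = (SOME B. B \<in> carrier_mat (dim_row A) (dim_row A) \<and>
      A * B = 1\<^sub>m (dim_row A) \<and> B * A = 1\<^sub>m (dim_row A))"

end

theory Submission
  imports Defs "HOL-Combinatorics.Permutations"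
begin

lemma sum_mult_decomp:
  fixes f :: "nat \<Rightarrow> 'a::comm_monoid_add"
  shows "(\<Sum>k<a*b. f k) = (\<Sum>u<a. \<Sum>v<b. f (u*b+v))"
proof (induction a)
  case 0 then show ?case by simp
next
  case (Suc a)
  have e: "{..<Suc a * b} = {..<a*b} \<union> {a*b..<a*b+b}" by auto
  have "(\<Sum>k<Suc a*b. f k) = (\<Sum>k<a*b. f k) + (\<Sum>k\<in>{a*b..<a*b+b}. f k)"
    unfolding e by (rule sum.union_disjoint) auto
  also have "(\<Sum>k\<in>{a*b..<a*b+b}. f k) = (\<Sum>v<b. f (a*b+v))"
  proof -
    have "(\<Sum>k\<in>{a*b..<a*b+b}. f k) = (\<Sum>k\<in>{0+a*b..<b+a*b}. f k)" by (simp add: add.commute)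
    also have "\<dots> = (\<Sum>v\<in>{0..<b}. f (v+a*b))" by (rule sum.shift_bounds_nat_ivl)
    finally show ?thesis by (simp add: atLeast0LessThan add.commute)
  qed
  finally show ?case using Suc by simp
qed

lemma sum_add_split:
  fixes f :: "nat \<Rightarrow> 'a::comm_monoid_add"
  shows "(\<Sum>k<a+b. f k) = (\<Sum>k<a. f k) + (\<Sum>k<b. f (a+k))"
  by (induction b) (auto simp: add.assoc)

lemma mult_entry:
  assumes "i < dim_row A" "j < dim_col B" "dim_col A = dim_row B"
  shows "(A*B)$$(i,j) = (\<Sum>k<dim_col A. A$$(i,k) * B$$(k,j))"
  using assms by (auto simp: scalar_prod_def atLeast0LessThan intro!: sum.cong)

lemma kron_dims[simp]: "dim_row (kron A B) = dim_row A * dim_row B" "dim_col (kron A B) = dim_col A * dim_col B"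
  by (simp_all add: kron_def)

lemma kron_index:
  assumes "i < dim_row A * dim_row B" "j < dim_col A * dim_col B"
  shows "kron A B $$ (i,j) = A $$ (i div dim_row B, j div dim_col B) * B $$ (i mod dim_row B, j mod dim_col B)"
  using assms by (simp add: kron_def)

lemma lt_mult_decomp: "u < (a::nat) \<Longrightarrow> v < b \<Longrightarrow> u*b+v < a*b"
proof -
  assume u: "u < a" and v: "v < b"
  have "Suc u * b \<le> a * b" using u by (intro mult_right_mono) auto
  then show ?thesis using v by simp
qed

lemma kron_mult:
  fixes A B C D :: "'a::comm_semiring_1 mat"
  assumes "dim_col A = dim_row C" "dim_col B = dim_row D"
  shows "kron A B * kron C D = kron (A*C) (B*D)"
proof (rule eq_matI)
  fix i j assume i: "i < dim_row (kron (A*C) (B*D))" and j: "j < dim_col (kron (A*C) (B*D))"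
  have i': "i < dim_row A * dim_row B" and j': "j < dim_col C * dim_col D" using i j by auto
  have id: "i div dim_row B < dim_row A" using i' by (simp add: less_mult_imp_div_less)
  have jd: "j div dim_col D < dim_col C" using j' by (simp add: less_mult_imp_div_less)
  have rB: "dim_row B \<noteq> 0" using i' by (cases "dim_row B = 0") auto
  have cD: "dim_col D \<noteq> 0" using j' by (cases "dim_col D = 0") auto
  have im: "i mod dim_row B < dim_row B" and jm: "j mod dim_col D < dim_col D" using rB cD by auto
  have "(kron A B * kron C D) $$ (i,j) = (\<Sum>k<dim_col A*dim_col B. kron A B $$ (i,k) * kron C D $$ (k,j))"
    by (rule trans[OF mult_entry]) (use i' j' assms in auto)
  also have "\<dots> = (\<Sum>u<dim_col A. \<Sum>v<dim_col B. kron A B $$ (i,u*dim_col B+v) * kron C D $$ (u*dim_col B+v,j))"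
    by (rule sum_mult_decomp)
  also have "\<dots> = (\<Sum>u<dim_col A. \<Sum>v<dim_col B. (A$$(i div dim_row B,u) * C$$(u, j div dim_col D)) * (B$$(i mod dim_row B,v) * D$$(v, j mod dim_col D)))"
  proof (intro sum.cong refl)
    fix u v assume u: "u \<in> {..<dim_col A}" and v: "v \<in> {..<dim_col B}"
    have lt: "u*dim_col B+v < dim_col A*dim_col B" using u v by (simp add: lt_mult_decomp)
    have d: "(u*dim_col B+v) div dim_col B = u" "(u*dim_col B+v) mod dim_col B = v" using v by auto
    show "kron A B $$ (i,u*dim_col B+v) * kron C D $$ (u*dim_col B+v,j) = (A$$(i div dim_row B,u) * C$$(u, j div dim_col D)) * (B$$(i mod dim_row B,v) * D$$(v, j mod dim_col D))"
      using lt d i' j' assms by (simp add: kron_index ac_simps)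
  qed
  also have "\<dots> = (A*C)$$(i div dim_row B, j div dim_col D) * (B*D)$$(i mod dim_row B, j mod dim_col D)"
    using id jd im jm assms by (simp add: mult_entry sum_product del: index_mult_mat(1))
  also have "\<dots> = kron (A*C) (B*D) $$ (i,j)" using i' j' by (simp add: kron_index)
  finally show "(kron A B * kron C D) $$ (i,j) = kron (A*C) (B*D) $$ (i,j)" .
qed simp_all

lemma diagm_carrier[simp]: "diagm n d \<in> carrier_mat n n" and diagm_dims[simp]: "dim_row (diagm n d) = n" "dim_col (diagm n d) = n"
  by (simp_all add: diagm_def)

lemma diagm_index: "i < n \<Longrightarrow> j < n \<Longrightarrow> diagm n d $$ (i,j) = (if i = j then d i else 0)"
  by (simp add: diagm_def)

lemma diagm_mult_left:
  fixes B :: "'a::semiring_0 mat"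
  assumes "dim_row B = n"
  shows "diagm n d * B = mat n (dim_col B) (\<lambda>(i,j). d i * B$$(i,j))"
proof (rule eq_matI)
  fix i j assume i: "i < dim_row (mat n (dim_col B) (\<lambda>(i,j). d i * B$$(i,j)))" and j: "j < dim_col (mat n (dim_col B) (\<lambda>(i,j). d i * B$$(i,j)))"
  then have i': "i < n" and j': "j < dim_col B" by auto
  have "(diagm n d * B)$$(i,j) = (\<Sum>k<n. diagm n d $$ (i,k) * B$$(k,j))"
    using i' j' assms by (simp add: mult_entry del: index_mult_mat(1))
  also have "\<dots> = (\<Sum>k<n. if k = i then d i * B$$(i,j) else 0)"
    by (intro sum.cong refl) (auto simp: diagm_index i')
  also have "\<dots> = d i * B$$(i,j)" using i' by simp
  finally show "(diagm n d * B)$$(i,j) = mat n (dim_col B) (\<lambda>(i,j). d i * B$$(i,j)) $$ (i,j)" using i' j' by simp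
qed (use assms in simp_all)

lemma mult_diagm_right:
  fixes B :: "'a::semiring_0 mat"
  assumes "dim_col B = n"
  shows "B * diagm n d = mat (dim_row B) n (\<lambda>(i,j). B$$(i,j) * d j)"
proof (rule eq_matI)
  fix i j assume i: "i < dim_row (mat (dim_row B) n (\<lambda>(i,j). B$$(i,j) * d j))" and j: "j < dim_col (mat (dim_row B) n (\<lambda>(i,j). B$$(i,j) * d j))"
  then have i': "i < dim_row B" and j': "j < n" by auto
  have "(B * diagm n d)$$(i,j) = (\<Sum>k<n. B$$(i,k) * diagm n d $$ (k,j))"
    using i' j' assms by (simp add: mult_entry del: index_mult_mat(1))
  also have "\<dots> = (\<Sum>k<n. if k = j then B$$(i,j) * d j else 0)"
    by (intro sum.cong refl) (auto simp: diagm_index j')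
  also have "\<dots> = B$$(i,j) * d j" using j' by simp
  finally show "(B * diagm n d)$$(i,j) = mat (dim_row B) n (\<lambda>(i,j). B$$(i,j) * d j) $$ (i,j)" using i' j' by simp
qed (use assms in simp_all)

lemma one_diagm: "1\<^sub>m n = diagm n (\<lambda>_. 1)"
  by (rule eq_matI) (auto simp: diagm_index)

lemma mat_inv_props:
  assumes A: "A \<in> carrier_mat n n" and inv: "invertible_mat A"
  shows "mat_inv A \<in> carrier_mat n n \<and> A * mat_inv A = 1\<^sub>m n \<and> mat_inv A * A = 1\<^sub>m n"
proof -
  obtain B where AB: "A * B = 1\<^sub>m (dim_row A)" and BA: "B * A = 1\<^sub>m (dim_row B)"
    using inv unfolding invertible_mat_def inverts_mat_def by blast
  have r: "dim_row A = n" "dim_col A = n" using A by auto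
  have "dim_col B = n" using AB r by (metis index_mult_mat(3) index_one_mat(3))
  moreover have "dim_row B = n" using BA r by (metis index_mult_mat(3) index_one_mat(3))
  ultimately have ex: "\<exists>B. B \<in> carrier_mat (dim_row A) (dim_row A) \<and> A * B = 1\<^sub>m (dim_row A) \<and> B * A = 1\<^sub>m (dim_row A)"
    using AB BA r by (intro exI[of _ B]) auto
  show ?thesis using someI_ex[OF ex] r unfolding mat_inv_def by simp
qed

lemma mat_inv_unique:
  assumes A: "A \<in> carrier_mat n n" and B: "B \<in> carrier_mat n n" and AB: "A * B = 1\<^sub>m n" and BA: "B * A = 1\<^sub>m n"
  shows "mat_inv A = B"
proof -
  have inv: "invertible_mat A" using A B AB BA unfolding invertible_mat_def inverts_mat_def square_mat.simps
    by (intro conjI exI[of _ B]) auto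
  note p = mat_inv_props[OF A inv]
  let ?B' = "mat_inv A"
  have "?B' = ?B' * (A * B)" using p AB right_mult_one_mat[of "mat_inv A" n n] by auto
  also have "\<dots> = (?B' * A) * B" by (rule assoc_mult_mat[symmetric]) (use p A B in auto)
  also have "\<dots> = B" using p B by simp
  finally show ?thesis .
qed

lemma hcat_dims[simp]: "dim_row (hcat A B) = dim_row A" "dim_col (hcat A B) = dim_col A + dim_col B"
  by (simp_all add: hcat_def)

lemma hcat_index: "i < dim_row A \<Longrightarrow> j < dim_col A + dim_col B \<Longrightarrow>
   hcat A B $$ (i,j) = (if j < dim_col A then A $$ (i,j) else B $$ (i, j - dim_col A))"
  by (simp add: hcat_def)

lemma hcat_mult_left:
  assumes "dim_col X = dim_row A" "dim_row B = dim_row A"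
  shows "X * hcat A B = hcat (X*A) (X*B)"
proof (rule eq_matI)
  fix i j assume i: "i < dim_row (hcat (X*A) (X*B))" and j: "j < dim_col (hcat (X*A) (X*B))"
  then have i': "i < dim_row X" and j': "j < dim_col A + dim_col B" by auto
  show "(X * hcat A B) $$ (i,j) = hcat (X*A) (X*B) $$ (i,j)"
  proof (cases "j < dim_col A")
    case True
    then show ?thesis using i' j' assms by (simp add: mult_entry hcat_index del: index_mult_mat(1))
  next
    case False
    then show ?thesis using i' j' assms by (simp add: mult_entry hcat_index del: index_mult_mat(1))
  qed
qed (use assms in simp_all)

lemma bdiag_dims[simp]: "dim_row (bdiag C D) = dim_row C + dim_row D" "dim_col (bdiag C D) = dim_col C + dim_col D"
  by (simp_all add: bdiag_def)

lemma hcat_mult_bdiag: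
  assumes "dim_col A = dim_row C" "dim_col B = dim_row D" "dim_row A = dim_row B"
  shows "hcat A B * bdiag C D = hcat (A*C) (B*D)"
proof (rule eq_matI)
  fix i j assume i: "i < dim_row (hcat (A*C) (B*D))" and j: "j < dim_col (hcat (A*C) (B*D))"
  then have i': "i < dim_row A" and j': "j < dim_col C + dim_col D" by auto
  have "(hcat A B * bdiag C D) $$ (i,j) = (\<Sum>k<dim_col A + dim_col B. hcat A B $$ (i,k) * bdiag C D $$ (k,j))"
    using i' j' assms by (simp add: mult_entry del: index_mult_mat(1))
  also have "\<dots> = (\<Sum>k<dim_col A. hcat A B $$ (i,k) * bdiag C D $$ (k,j)) + (\<Sum>k<dim_col B. hcat A B $$ (i,dim_col A + k) * bdiag C D $$ (dim_col A + k,j))"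
    by (rule sum_add_split)
  also have "\<dots> = hcat (A*C) (B*D) $$ (i,j)"
  proof (cases "j < dim_col C")
    case True
    have "(\<Sum>k<dim_col B. hcat A B $$ (i,dim_col A + k) * bdiag C D $$ (dim_col A + k,j)) = 0"
      using True i' j' assms by (intro sum.neutral) (auto simp: hcat_index bdiag_def)
    moreover have "(\<Sum>k<dim_col A. hcat A B $$ (i,k) * bdiag C D $$ (k,j)) = (A*C)$$(i,j)"
      using True i' j' assms by (auto simp: hcat_index bdiag_def mult_entry simp del: index_mult_mat(1) intro!: sum.cong)
    ultimately show ?thesis using True i' j' assms by (simp add: hcat_index)
  next
    case False
    have "(\<Sum>k<dim_col A. hcat A B $$ (i,k) * bdiag C D $$ (k,j)) = 0"
      using False i' j' assms by (intro sum.neutral) (auto simp: hcat_index bdiag_def)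
    moreover have "(\<Sum>k<dim_col B. hcat A B $$ (i,dim_col A + k) * bdiag C D $$ (dim_col A + k,j)) = (B*D)$$(i,j - dim_col C)"
      using False i' j' assms by (auto simp: hcat_index bdiag_def mult_entry simp del: index_mult_mat(1) intro!: sum.cong)
    ultimately show ?thesis using False i' j' assms by (simp add: hcat_index)
  qed
  finally show "(hcat A B * bdiag C D) $$ (i,j) = hcat (A*C) (B*D) $$ (i,j)" .
qed (use assms in simp_all)

lemma pick_mono_image:
  fixes f :: "nat \<Rightarrow> nat"
  assumes mono: "\<And>i j. i < j \<Longrightarrow> j < M \<Longrightarrow> f i < f j" and S: "S = f ` {..<M}"
  shows "i < M \<Longrightarrow> pick S i = f i"
proof (induction i)
  case 0
  show ?case unfolding pick.simps
  proof (rule Least_equality)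
    show "f 0 \<in> S" using 0 S by auto
    fix a assume "a \<in> S" then obtain k where k: "k < M" "a = f k" using S by auto
    show "f 0 \<le> a" using mono[of 0 k] k by (cases k) auto
  qed
next
  case (Suc i)
  then have IH: "pick S i = f i" by simp
  show ?case unfolding pick.simps IH
  proof (rule Least_equality)
    show "f (Suc i) \<in> S \<and> f i < f (Suc i)" using Suc.prems S mono[of i "Suc i"] by auto
    fix a assume "a \<in> S \<and> f i < a" then obtain k where k: "k < M" "a = f k" "f i < f k" using S by auto
    have "\<not> k \<le> i" using mono[of k i] k Suc.prems by (cases "k = i") auto
    then have "Suc i \<le> k" by simp
    then show "f (Suc i) \<le> a" using mono[of "Suc i" k] k by (cases "Suc i = k") auto
  qed
qed

lemma card_mono_image:
  fixes f :: "nat \<Rightarrow> nat"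
  assumes mono: "\<And>i j. i < j \<Longrightarrow> j < M \<Longrightarrow> f i < f j"
  shows "card (f ` {..<M}) = M"
proof -
  have "inj_on f {..<M}"
  proof (rule inj_onI)
    fix a b assume a: "a \<in> {..<M}" and b: "b \<in> {..<M}" and e: "f a = f b"
    show "a = b"
    proof (rule ccontr)
      assume "a \<noteq> b" then have "a < b \<or> b < a" by arith
      then show False using mono[of a b] mono[of b a] a b e by auto
    qed
  qed
  then show ?thesis by (simp add: card_image)
qed

lemma pick_interval: assumes "j < b - a" shows "pick {a..<b} j = a + j"
proof -
  have e: "{a..<b} = (\<lambda>j. a + j) ` {..<b - a}"
  proof safe
    fix x assume "x \<in> {a..<b}" then show "x \<in> (\<lambda>j. a+j) ` {..<b-a}" by (intro image_eqI[of _ _ "x - a"]) auto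
  qed auto
  show ?thesis by (rule pick_mono_image[OF _ e assms]) auto
qed


definition rowf :: "nat \<Rightarrow> nat \<Rightarrow> nat \<Rightarrow> nat" where
  "rowf N Q r = (if r < N then r else ((r - N) div (Q+1) + 1) * N + (r - N) mod (Q+1))"

definition Jset :: "nat \<Rightarrow> nat \<Rightarrow> nat set" where
  "Jset N Q = {0..<N} \<union> (\<Union>m\<in>{2..Q}. {(m-1)*N ..< (m-1)*N + Q + 1})"

lemma rowf_big: "\<not> r < N \<Longrightarrow> rowf N Q r = ((r - N) div (Q+1) + 1) * N + (r - N) mod (Q+1)"
  by (simp add: rowf_def)

lemma rowf_mono: assumes "Q < N" "r < r'" shows "rowf N Q r < rowf N Q r'"
proof (cases "r' < N")
  case True then show ?thesis using assms by (simp add: rowf_def)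
next
  case False
  define d' where "d' = (r' - N) div (Q+1)"
  have r': "rowf N Q r' = (d'+1)*N + (r'-N) mod (Q+1)" using False by (simp add: rowf_big d'_def)
  have big: "N \<le> (d'+1)*N" by simp
  show ?thesis
  proof (cases "r < N")
    case True then show ?thesis using r' big by (simp add: rowf_def)
  next
    case F2: False
    define d where "d = (r - N) div (Q+1)"
    have r: "rowf N Q r = (d+1)*N + (r-N) mod (Q+1)" using F2 by (simp add: rowf_big d_def)
    have uu: "r - N < r' - N" using assms F2 by simp
    have dd: "d \<le> d'" unfolding d_def d'_def using uu by (intro div_le_mono) simp
    have "(r-N) mod (Q+1) < Q+1" by simp
    then have m1: "(r-N) mod (Q+1) < N" using assms(1) by linarith
    show ?thesis
    proof (cases "d = d'")
      case True
      have e1: "r - N = d*(Q+1) + (r-N) mod (Q+1)" unfolding d_def by (rule div_mult_mod_eq[symmetric])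
      have e2: "r' - N = d*(Q+1) + (r'-N) mod (Q+1)" unfolding True d'_def by (rule div_mult_mod_eq[symmetric])
      have "(r-N) mod (Q+1) < (r'-N) mod (Q+1)" using e1 e2 uu by linarith
      then show ?thesis using r r' True by simp
    next
      case False
      then have "d + 2 \<le> d' + 1" using dd by simp
      then have "(d+2)*N \<le> (d'+1)*N" by (rule mult_le_mono1)
      then show ?thesis using r r' m1 by simp
    qed
  qed
qed

lemma rowf_image:
  assumes "1 \<le> Q" "Q < N"
  shows "rowf N Q ` {..<Q*Q+N-1} = Jset N Q"
proof -
  obtain q where Q: "Q = Suc q" using assms(1) by (cases Q) auto
  have QQ: "Q*Q + N - 1 = N + q*(Q+1)" unfolding Q by simp
  show ?thesis
  proof (intro equalityI subsetI)
    fix y assume "y \<in> rowf N Q ` {..<Q*Q+N-1}"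
    then obtain r where rr: "r < Q*Q+N-1" and y: "y = rowf N Q r" by auto
    then have rM: "r < N + q*(Q+1)" using QQ by simp
    have "rowf N Q r \<in> Jset N Q"
    proof (cases "r < N")
      case True then show ?thesis by (simp add: rowf_def Jset_def)
    next
      case False
      define d where "d = (r - N) div (Q+1)"
      have "r - N < q*(Q+1)" using rM False by simp
      then have dq: "d < q" unfolding d_def by (simp add: less_mult_imp_div_less)
      have mo: "(r - N) mod (Q+1) < Q+1" by simp
      have "rowf N Q r = (d+1)*N + (r-N) mod (Q+1)" using False by (simp add: rowf_big d_def)
      then have "rowf N Q r \<in> {(d+2-1)*N ..< (d+2-1)*N + Q + 1}" using mo by simp
      moreover have "d+2 \<in> {2..Q}" using dq Q by simp
      ultimately show ?thesis unfolding Jset_def by blast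
    qed
    then show "y \<in> Jset N Q" using y by simp
  next
    fix a assume a: "a \<in> Jset N Q"
    show "a \<in> rowf N Q ` {..<Q*Q+N-1}"
    proof (cases "a < N")
      case True
      then show ?thesis using QQ by (intro image_eqI[of _ _ a]) (auto simp: rowf_def)
    next
      case False
      then obtain m where m: "m \<in> {2..Q}" and am: "a \<in> {(m-1)*N ..< (m-1)*N + Q + 1}"
        using a unfolding Jset_def by auto
      obtain m' where m': "m = m' + 2" using m by (metis add.commute atLeastAtMost_iff le_Suc_ex)
      define i where "i = a - (m'+1)*N"
      have i: "i < Q+1" "a = (m'+1)*N + i" using am m' unfolding i_def by auto
      define r where "r = N + (m'*(Q+1) + i)"
      have d0: "(i + m'*(Q+1)) div (Q+1) = m' + i div (Q+1)" by (rule div_mult_self1) simp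
      have m0: "(i + m'*(Q+1)) mod (Q+1) = i mod (Q+1)" by (rule mod_mult_self1)
      have rv: "r - N = i + m'*(Q+1)" by (simp add: r_def)
      have "rowf N Q r = ((r - N) div (Q+1) + 1) * N + (r - N) mod (Q+1)" by (rule rowf_big) (simp add: r_def)
      also have "\<dots> = (m' + i div (Q+1) + 1) * N + i mod (Q+1)" by (simp only: rv d0 m0)
      also have "\<dots> = a" using i by simp
      finally have "rowf N Q r = a" .
      moreover have "m' + 1 \<le> q" using m m' Q by simp
      then have "(m'+1)*(Q+1) \<le> q*(Q+1)" by (rule mult_le_mono1)
      then have "r < Q*Q+N-1" using i unfolding QQ r_def by simp
      ultimately show ?thesis by blast
    qed
  qed
qed

lemma Jset_sub: assumes "1 \<le> Q" "Q < N" shows "Jset N Q \<subseteq> {..<Q*N}"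
proof
  fix a assume a: "a \<in> Jset N Q"
  show "a \<in> {..<Q*N}"
  proof (cases "a < N")
    case True
    have h: "N \<le> Q*N" using mult_le_mono1[of 1 Q N] assms by simp
    show ?thesis using less_le_trans[OF True h] by simp
  next
    case False
    then obtain m where m: "m \<in> {2..Q}" and am: "a \<in> {(m-1)*N ..< (m-1)*N + Q + 1}"
      using a unfolding Jset_def by auto
    have "m*N \<le> Q*N" using m by (intro mult_le_mono1) simp
    moreover have "(m-1)*N + N = m*N" using m by (cases m) auto
    ultimately have "(m-1)*N + N \<le> Q*N" by simp
    then show ?thesis using am assms by simp
  qed
qed

lemma card_J: assumes "1 \<le> Q" "Q < N" shows "card {i. i < Q*N \<and> i \<in> Jset N Q} = Q*Q+N-1"
proof -
  have "{i. i < Q*N \<and> i \<in> Jset N Q} = Jset N Q" using Jset_sub[OF assms] by auto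
  then show ?thesis using card_mono_image[of "Q*Q+N-1" "rowf N Q"] rowf_mono[OF assms(2)] rowf_image[OF assms] by simp
qed

lemma pick_J: assumes "1 \<le> Q" "Q < N" "r < Q*Q+N-1" shows "pick (Jset N Q) r = rowf N Q r"
  by (rule pick_mono_image[OF _ rowf_image[OF assms(1,2), symmetric] assms(3)]) (rule rowf_mono[OF assms(2)])

definition pp :: "nat \<Rightarrow> nat \<Rightarrow> nat \<Rightarrow> nat" where
  "pp N Q s = (if s \<le> Q then s else if s < Q*Q+Q then s + N - (Q+1) else if s < Q*Q+N-1 then s + 1 - Q*Q else s)"

lemma QQ_ge: "1 \<le> Q \<Longrightarrow> Q \<le> Q*(Q::nat)"
proof -
  assume "1 \<le> Q" then have "1*Q \<le> Q*Q" by (intro mult_le_mono1)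
  then show ?thesis by simp
qed

lemma pp_cases:
  assumes "s < K + N - 1" "K = Q*Q"
  shows "(s \<le> Q \<and> pp N Q s = s) \<or> (Q < s \<and> s < K+Q \<and> pp N Q s + (Q+1) = s + N) \<or> (K+Q \<le> s \<and> pp N Q s + K = s + 1)"
proof -
  have "s < Q*Q+N-1" using assms by simp
  then show ?thesis unfolding pp_def assms(2) by auto
qed

lemma pp_perm: assumes "1 \<le> Q" "Q < N" shows "pp N Q permutes {0..<Q*Q+N-1}"
proof (rule bij_imp_permutes)
  define K where "K = Q*Q"
  have K: "Q \<le> K" using QQ_ge[OF assms(1)] K_def by simp
  have inj: "inj_on (pp N Q) {0..<Q*Q+N-1}"
  proof (rule inj_onI)
    fix a b assume a: "a \<in> {0..<Q*Q+N-1}" and b: "b \<in> {0..<Q*Q+N-1}" and e: "pp N Q a = pp N Q b"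
    have a': "a < K + N - 1" and b': "b < K + N - 1" using a b K_def by auto
    from pp_cases[OF a' K_def] pp_cases[OF b' K_def] e K assms a' b' show "a = b"
      by (elim disjE conjE; linarith)
  qed
  have sub: "pp N Q ` {0..<Q*Q+N-1} \<subseteq> {0..<Q*Q+N-1}"
  proof
    fix y assume "y \<in> pp N Q ` {0..<Q*Q+N-1}"
    then obtain a where a: "a < K + N - 1" and y: "y = pp N Q a" using K_def by auto
    from pp_cases[OF a K_def] K assms y a have "y < K + N - 1"
      by (elim disjE conjE; linarith)
    then show "y \<in> {0..<Q*Q+N-1}" using K_def by simp
  qed
  have "pp N Q ` {0..<Q*Q+N-1} = {0..<Q*Q+N-1}" by (rule endo_inj_surj[OF _ sub inj]) simp
  then show "bij_betw (pp N Q) {0..<Q*Q+N-1} {0..<Q*Q+N-1}" using inj by (simp add: bij_betw_def)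
next
  fix x assume x: "x \<notin> {0..<Q*Q+N-1}"
  define K where "K = Q*Q"
  have "\<not> x < K + N - 1" using x K_def by simp
  moreover have K: "Q \<le> K" using QQ_ge[OF assms(1)] K_def by simp
  moreover have "\<not> x \<le> Q" using calculation assms by linarith
  moreover have "\<not> x < K + Q" using calculation assms by linarith
  ultimately show "pp N Q x = x" unfolding pp_def K_def[symmetric] by simp
qed

lemma pp_lt: assumes "1 \<le> Q" "Q < N" "s < Q*Q+N-1" shows "pp N Q s < Q*Q+N-1"
proof -
  define K where "K = Q*Q"
  have K: "Q \<le> K" using QQ_ge[OF assms(1)] K_def by simp
  have a: "s < K + N - 1" using assms K_def by simp
  from pp_cases[OF a K_def] K assms a have "pp N Q s < K + N - 1"
    by (elim disjE conjE; linarith)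
  then show ?thesis using K_def by simp
qed

lemma rowf_pp:
  assumes "1 \<le> Q" "Q < N" "s < Q*Q+N-1"
  shows "rowf N Q (pp N Q s) = (if s < Q*Q+Q then (s div (Q+1))*N + s mod (Q+1) else s + 1 - Q*Q)"
proof (cases "s \<le> Q")
  case True
  have "s < Q*Q+Q" using True QQ_ge[OF assms(1)] assms(1) by linarith
  then show ?thesis using assms True by (simp add: pp_def rowf_def)
next
  case False
  show ?thesis
  proof (cases "s < Q*Q+Q")
    case True
    have p: "pp N Q s = N + (s - (Q+1))" using False True assms by (simp add: pp_def)
    have "s div (Q+1) = Suc ((s - (Q+1)) div (Q+1))" using False by (intro le_div_geq) auto
    moreover have "s mod (Q+1) = (s - (Q+1)) mod (Q+1)" using False by (intro le_mod_geq) auto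
    ultimately show ?thesis using True by (simp add: p rowf_def)
  next
    case F2: False
    have p: "pp N Q s = s + 1 - Q*Q" using False F2 assms by (simp add: pp_def)
    have "s + 1 - Q*Q < N" using assms by simp
    then show ?thesis using F2 by (simp add: p rowf_def)
  qed
qed


definition Tm :: "nat \<Rightarrow> complex mat \<Rightarrow> complex mat \<Rightarrow> nat \<Rightarrow> nat \<Rightarrow> complex" where
  "Tm Q S P m j = (\<Sum>q<Q. S$$(m,q) * P$$(j,q))"

definition Ared :: "nat \<Rightarrow> complex vec \<Rightarrow> complex mat \<Rightarrow> complex mat \<Rightarrow> complex mat" where
  "Ared Q x P S = mat (Q*Q+Q) (Q*Q+Q) (\<lambda>(s,c). if c < Q*Q then
      (if s div (Q+1) = c div Q then x$(s mod (Q+1)) * P$$(s mod (Q+1), c mod Q) else 0)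
    else (if s mod (Q+1) = c + 1 - Q*Q then Tm Q S P (s div (Q+1)) (s mod (Q+1)) else 0))"

lemma Dmat_dims[simp]: "dim_row (Dmat B) = dim_row B * dim_col B" "dim_col (Dmat B) = dim_row B"
  by (simp_all add: Dmat_def)

lemma Dmat_index: "r < dim_row B * dim_col B \<Longrightarrow> j < dim_row B \<Longrightarrow>
  Dmat B $$ (r,j) = (if r mod dim_row B = j then B$$(j, r div dim_row B) else 0)"
  by (simp add: Dmat_def)

lemma divmod_aux: assumes "b < (N::nat)" shows "(a*N+b) div N = a" "(a*N+b) mod N = b"
proof -
  have N: "N \<noteq> 0" using assms by simp
  have "(b + a*N) div N = a + b div N" by (rule div_mult_self1[OF N])
  then show "(a*N+b) div N = a" using assms by (simp add: add.commute)
  have "(b + a*N) mod N = b mod N" by (rule mod_mult_self1)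
  then show "(a*N+b) mod N = b" using assms by (simp add: add.commute)
qed

lemma kron_diag_Dmat:
  fixes S R :: "'a::comm_ring_1 mat"
  assumes S: "S \<in> carrier_mat Q Q" and R: "R \<in> carrier_mat n Q" and r: "r < Q*n" and j: "j < n"
  shows "(kron S (diagm n d) * Dmat R) $$ (r,j) = (if r mod n = j then d j * (\<Sum>u<Q. S$$(r div n, u) * R$$(j,u)) else 0)"
proof -
  have n0: "n \<noteq> 0" using j by simp
  have rd: "r div n < Q" using r by (simp add: less_mult_imp_div_less)
  have rm: "r mod n < n" using n0 by simp
  have dr: "dim_row R = n" "dim_col R = Q" using R by auto
  have "(kron S (diagm n d) * Dmat R) $$ (r,j) = (\<Sum>k<Q*n. kron S (diagm n d) $$ (r,k) * Dmat R $$ (k,j))"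
    using S R r j by (subst mult_entry) (auto simp: mult.commute)
  also have "\<dots> = (\<Sum>u<Q. \<Sum>v<n. kron S (diagm n d) $$ (r,u*n+v) * Dmat R $$ (u*n+v,j))"
    by (rule sum_mult_decomp)
  also have "\<dots> = (\<Sum>u<Q. \<Sum>v<n. if v = r mod n then (if r mod n = j then S$$(r div n, u) * d j * R$$(j,u) else 0) else 0)"
  proof (intro sum.cong refl)
    fix u v assume u: "u \<in> {..<Q}" and v: "v \<in> {..<n}"
    have lt: "u*n+v < Q*n" using u v by (simp add: lt_mult_decomp)
    have lt2: "u*n+v < n*Q" using lt by (simp add: mult.commute)
    have dm: "(u*n+v) div n = u" "(u*n+v) mod n = v" using v by (auto simp: divmod_aux)
    show "kron S (diagm n d) $$ (r,u*n+v) * Dmat R $$ (u*n+v,j) = (if v = r mod n then (if r mod n = j then S$$(r div n, u) * d j * R$$(j,u) else 0) else 0)"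
      using S r lt lt2 dm rm v j dr by (auto simp: kron_index diagm_index Dmat_index)
  qed
  also have "\<dots> = (\<Sum>u<Q. if r mod n = j then S$$(r div n, u) * d j * R$$(j,u) else 0)"
    using rm by simp
  also have "\<dots> = (if r mod n = j then d j * (\<Sum>u<Q. S$$(r div n, u) * R$$(j,u)) else 0)"
  proof (cases "r mod n = j")
    case True then show ?thesis by (simp add: sum_distrib_left algebra_simps)
  qed simp
  finally show ?thesis .
qed

lemma cmod_signof: "cmod (signof p) = 1"
  by (simp add: sign_def)

lemma partA:
  fixes N Q :: nat and P S :: "complex mat" and x :: "complex vec"
  assumes N2: "N \<ge> 2" and Q1: "1 \<le> Q" and QN: "Q < N"
    and P: "P \<in> carrier_mat N Q" and S: "S \<in> carrier_mat Q Q"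
  shows "cmod (det (hcat (submatrix (kron (1\<^sub>m Q) (diagm N (\<lambda>i. x $ i) * P)) (Jset N Q) UNIV)
                         (submatrix (kron S (1\<^sub>m N) * Dmat P) (Jset N Q) {1..<N})))
    = (\<Prod>j\<in>{Q+1..<N}. cmod (Tm Q S P 0 j)) * cmod (det (Ared Q x P S))"
proof -
  define M where "M = Q*Q+N-1"
  define XP where "XP = diagm N (\<lambda>i. x $ i) * P"
  define A where "A = hcat (submatrix (kron (1\<^sub>m Q) XP) (Jset N Q) UNIV) (submatrix (kron S (1\<^sub>m N) * Dmat P) (Jset N Q) {1..<N})"
  have XPe: "XP = mat N Q (\<lambda>(i,q). x$i * P$$(i,q))" unfolding XP_def using P by (subst diagm_mult_left) auto
  have Q0: "Q \<noteq> 0" and N0: "N \<noteq> 0" using Q1 QN by auto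
  have K1e: "kron (1\<^sub>m Q) XP $$ (g,c) = (if g div N = c div Q then x$(g mod N) * P$$(g mod N, c mod Q) else 0)"
    if g: "g < Q*N" and c: "c < Q*Q" for g c
  proof -
    have "g div N < Q" using g by (simp add: less_mult_imp_div_less)
    moreover have "c div Q < Q" using c by (simp add: less_mult_imp_div_less)
    moreover have "g mod N < N" "c mod Q < Q" using Q0 N0 by auto
    ultimately show ?thesis using g c by (simp add: kron_index XPe)
  qed
  have K2e: "(kron S (1\<^sub>m N) * Dmat P) $$ (g,j) = (if g mod N = j then Tm Q S P (g div N) j else 0)"
    if g: "g < Q*N" and j: "j < N" for g j
    unfolding one_diagm using kron_diag_Dmat[OF S P g j] by (simp add: Tm_def)
  have cJ: "card {i. i < Q*N \<and> i \<in> Jset N Q} = M" unfolding M_def by (rule card_J[OF Q1 QN])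
  have c1: "card {j. j < Q*Q \<and> j \<in> (UNIV::nat set)} = Q*Q" by simp
  have c2: "card {j. j < N \<and> j \<in> {1..<N}} = N - 1"
  proof -
    have "{j. j < N \<and> j \<in> {1..<N}} = {1..<N}" by auto
    then show ?thesis by simp
  qed
  have dP: "dim_row P = N" "dim_col P = Q" using P by auto
  have dXP: "dim_row XP = N" "dim_col XP = Q" using XPe by auto
  have dS: "dim_row S = Q" "dim_col S = Q" using S by auto
  have rowlt: "rowf N Q r < Q*N" if "r < M" for r
  proof -
    have "rowf N Q r \<in> rowf N Q ` {..<Q*Q+N-1}" using that M_def by simp
    then have "rowf N Q r \<in> Jset N Q" unfolding rowf_image[OF Q1 QN] .
    then have "rowf N Q r \<in> {..<Q*N}" using Jset_sub[OF Q1 QN] by (rule subsetD[rotated])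
    then show ?thesis by simp
  qed
  define sub1 where "sub1 = submatrix (kron (1\<^sub>m Q) XP) (Jset N Q) UNIV"
  define sub2 where "sub2 = submatrix (kron S (1\<^sub>m N) * Dmat P) (Jset N Q) {1..<N}"
  have ds1: "dim_row sub1 = M" "dim_col sub1 = Q*Q" unfolding sub1_def dim_submatrix
    using cJ c1 dXP by simp_all
  have ds2: "dim_row sub2 = M" "dim_col sub2 = N - 1" unfolding sub2_def dim_submatrix
    using cJ c2 dP dS by simp_all
  have Adim: "A \<in> carrier_mat M M"
    unfolding A_def sub1_def[symmetric] sub2_def[symmetric] carrier_mat_def using ds1 ds2 QN M_def by simp
  have Ae: "A $$ (r,c) = (if c < Q*Q then (if rowf N Q r div N = c div Q then x$(rowf N Q r mod N) * P$$(rowf N Q r mod N, c mod Q) else 0)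
      else (if rowf N Q r mod N = c + 1 - Q*Q then Tm Q S P (rowf N Q r div N) (c + 1 - Q*Q) else 0))"
    if r: "r < M" and c: "c < M" for r c
  proof -
    have pr: "pick (Jset N Q) r = rowf N Q r" using pick_J[OF Q1 QN] r M_def by simp
    have cM: "c < dim_col sub1 + dim_col sub2" using c ds1 ds2 M_def QN by simp
    have hA: "A $$ (r,c) = (if c < Q*Q then sub1 $$ (r,c) else sub2 $$ (r, c - Q*Q))"
      unfolding A_def sub1_def[symmetric] sub2_def[symmetric] using hcat_index[OF _ cM, of r] r ds1 by simp
    have rr: "r < card {i. i < dim_row (kron (1\<^sub>m Q) XP) \<and> i \<in> Jset N Q}" using r cJ dXP by simp
    have rr2: "r < card {i. i < dim_row (kron S (1\<^sub>m N) * Dmat P) \<and> i \<in> Jset N Q}" using r cJ dS by simp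
    show ?thesis
    proof (cases "c < Q*Q")
      case True
      have cc: "c < card {j. j < dim_col (kron (1\<^sub>m Q) XP) \<and> j \<in> (UNIV::nat set)}" using True dXP by simp
      have "A $$ (r,c) = kron (1\<^sub>m Q) XP $$ (rowf N Q r, c)"
        using hA True submatrix_index[OF rr cc] unfolding sub1_def pr pick_UNIV by simp
      then show ?thesis using K1e[OF rowlt[OF r] True] True by simp
    next
      case False
      have cc: "c - Q*Q < N - 1" using c False M_def by simp
      have cc2: "c - Q*Q < card {j. j < dim_col (kron S (1\<^sub>m N) * Dmat P) \<and> j \<in> {1..<N}}" using cc c2 dP by simp
      have pc: "pick {1..<N} (c - Q*Q) = c + 1 - Q*Q" using pick_interval[of "c - Q*Q" N 1] cc False by simp
      have "A $$ (r,c) = (kron S (1\<^sub>m N) * Dmat P) $$ (rowf N Q r, c + 1 - Q*Q)"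
        using hA False submatrix_index[OF rr2 cc2] unfolding sub2_def pr pc by simp
      then show ?thesis using K2e[OF rowlt[OF r], of "c + 1 - Q*Q"] False cc by simp
    qed
  qed
  define B where "B = mat M M (\<lambda>(i,j). A $$ (pp N Q i, j))"
  have detB: "det B = signof (pp N Q) * det A"
    unfolding B_def by (rule det_permute_rows[OF Adim]) (use pp_perm[OF Q1 QN] M_def in simp)
  define n2 where "n2 = Q*Q+Q"
  define k where "k = N - 1 - Q"
  have Mn: "M = n2 + k" unfolding M_def n2_def k_def using QN by simp
  define Cb where "Cb = mat k n2 (\<lambda>(t,c). B $$ (n2+t, c))"
  define Dg where "Dg = mat k k (\<lambda>(t,t'). if t = t' then Tm Q S P 0 (Q+1+t) else 0)"
  have Be: "B $$ (s,c) = A $$ (pp N Q s, c)" if "s < M" "c < M" for s c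
    using that by (simp add: B_def)
  have Bblock: "B = four_block_mat (Ared Q x P S) (0\<^sub>m n2 k) Cb Dg"
  proof (rule eq_matI)
    fix s c assume s: "s < dim_row (four_block_mat (Ared Q x P S) (0\<^sub>m n2 k) Cb Dg)"
      and c: "c < dim_col (four_block_mat (Ared Q x P S) (0\<^sub>m n2 k) Cb Dg)"
    have dA: "dim_row (Ared Q x P S) = n2" "dim_col (Ared Q x P S) = n2" by (simp_all add: Ared_def n2_def)
    have s': "s < M" and c': "c < M" using s c dA Mn by (auto simp: Dg_def)
    have ps: "pp N Q s < M" using pp_lt[OF Q1 QN] s' M_def by simp
    have rp: "rowf N Q (pp N Q s) = (if s < n2 then (s div (Q+1))*N + s mod (Q+1) else s + 1 - Q*Q)"
      using rowf_pp[OF Q1 QN] s' M_def n2_def by simp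
    note Bsc = Be[OF s' c'] Ae[OF ps c']
    show "B $$ (s,c) = four_block_mat (Ared Q x P S) (0\<^sub>m n2 k) Cb Dg $$ (s,c)"
    proof (cases "s < n2")
      case True
      have "s mod (Q+1) < Q+1" by simp
      then have smod: "s mod (Q+1) < N" using QN by linarith
      have g: "rowf N Q (pp N Q s) div N = s div (Q+1)" "rowf N Q (pp N Q s) mod N = s mod (Q+1)"
        using rp True smod by (simp_all add: divmod_aux)
      show ?thesis
      proof (cases "c < n2")
        case True2: True
        show ?thesis using Bsc True True2 dA g s c by (simp add: Ared_def n2_def)
      next
        case False
        have "s mod (Q+1) < Q+1" by simp
        then have "s mod (Q+1) \<noteq> c + 1 - Q*Q" using False n2_def by linarith
        then show ?thesis using Bsc True False dA g s c by (simp add: n2_def Dg_def)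
      qed
    next
      case False
      show ?thesis
      proof (cases "c < n2")
        case True
        then show ?thesis using False dA s c Mn by (simp add: Cb_def Dg_def)
      next
        case F2: False
        have gl: "s + 1 - Q*Q < N" using s' M_def QN by linarith
        have g: "rowf N Q (pp N Q s) div N = 0" "rowf N Q (pp N Q s) mod N = s + 1 - Q*Q"
          using rp False gl by simp_all
        have e: "Q + 1 + (s - n2) = s + 1 - Q*Q" using False n2_def by simp
        have ce: "c + 1 - Q*Q = Suc (c - Q*Q)" using F2 n2_def by simp
        show ?thesis using Bsc False F2 dA g s c Mn e ce by (auto simp: Dg_def n2_def)
      qed
    qed
  qed (auto simp: B_def Ared_def Mn Dg_def n2_def)
  have dAr: "Ared Q x P S \<in> carrier_mat n2 n2" by (simp add: Ared_def n2_def)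
  have detB2: "det B = det (Ared Q x P S) * det Dg"
    unfolding Bblock by (rule det_four_block_mat_upper_right_zero[OF dAr refl]) (auto simp: Cb_def Dg_def)
  have "det Dg = prod_list (diag_mat Dg)"
    by (rule det_upper_triangular) (auto simp: upper_triangular_def Dg_def)
  also have "\<dots> = (\<Prod>i = 0..<k. Tm Q S P 0 (Q+1+i))" unfolding prod_list_diag_prod by (simp add: Dg_def)
  also have "\<dots> = (\<Prod>j\<in>{Q+1..<N}. Tm Q S P 0 j)"
  proof -
    have eqN: "k + (Q+1) = N" using QN k_def by simp
    have "(\<Prod>j\<in>{Q+1..<N}. Tm Q S P 0 j) = (\<Prod>j\<in>{0 + (Q+1)..<k + (Q+1)}. Tm Q S P 0 j)"
      by (simp only: add.left_neutral eqN)
    also have "\<dots> = (\<Prod>i=0..<k. Tm Q S P 0 (i + (Q+1)))"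
      by (rule prod.shift_bounds_nat_ivl)
    also have "\<dots> = (\<Prod>i=0..<k. Tm Q S P 0 (Q+1+i))"
      by (simp only: add.commute)
    finally show ?thesis by simp
  qed
  finally have detDg: "det Dg = (\<Prod>j\<in>{Q+1..<N}. Tm Q S P 0 j)" .
  have "cmod (det B) = cmod (signof (pp N Q) :: complex) * cmod (det A)" unfolding detB by (rule norm_mult)
  then have "cmod (det B) = 1 * cmod (det A)" unfolding cmod_signof .
  then have "cmod (det A) = cmod (det B)" by simp
  also have "\<dots> = (\<Prod>j\<in>{Q+1..<N}. cmod (Tm Q S P 0 j)) * cmod (det (Ared Q x P S))"
    using detB2 detDg by (simp add: norm_mult prod_norm)
  finally show ?thesis unfolding A_def XP_def .
qed


lemma partB:
  fixes N Q :: nat and P S :: "complex mat" and x :: "complex vec"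
  assumes Q1: "1 \<le> Q" and QN: "Q < N"
    and P: "P \<in> carrier_mat N Q"
    and xnz: "\<And>i. 1 \<le> i \<Longrightarrow> i \<le> Q \<Longrightarrow> x $ i \<noteq> 0"
    and S: "S \<in> carrier_mat Q Q" and Sinv: "invertible_mat S"
  shows "kron S (1\<^sub>m (Q+1)) * kron (1\<^sub>m Q) (diagm (Q+1) (\<lambda>i. x $ i))
     * hcat (kron (1\<^sub>m Q) (submatrix P {0..<Q+1} UNIV)) (submatrix (Dmat (submatrix P {0..<Q+1} UNIV)) UNIV {1..<Q+1})
     * bdiag (kron (mat_inv S) (1\<^sub>m Q)) (1\<^sub>m Q)
     * bdiag (1\<^sub>m (Q^2)) (mat_inv (diagm Q (\<lambda>i. x $ (i+1))))
     = Ared Q x P S"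
proof -
  define Pt where "Pt = submatrix P {0..<Q+1} UNIV"
  define Xt where "Xt = diagm (Q+1) (\<lambda>i. x $ i)"
  define Si where "Si = mat_inv S"
  define Dsub where "Dsub = submatrix (Dmat Pt) UNIV {1..<Q+1}"
  define Di where "Di = mat_inv (diagm Q (\<lambda>i. x $ (i+1)))"
  have dP: "dim_row P = N" "dim_col P = Q" using P by auto
  have Q0: "Q \<noteq> 0" using Q1 by simp
  have cPt1: "{i. i < N \<and> i \<in> {0..<Q+1}} = {0..<Q+1}" using QN by auto
  have dPt: "dim_row Pt = Q+1" "dim_col Pt = Q" unfolding Pt_def dim_submatrix dP cPt1 by simp_all
  have Pte: "Pt $$ (i,q) = P $$ (i,q)" if "i < Q+1" "q < Q" for i q
  proof -
    have "Pt $$ (i,q) = P $$ (pick {0..<Q+1} i, pick UNIV q)"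
      unfolding Pt_def by (rule submatrix_index) (use that dP cPt1 in simp_all)
    moreover have "pick {0..<Q+1} i = i" using pick_interval[of i "Q+1" 0] that by simp
    ultimately show ?thesis by (simp add: pick_UNIV)
  qed
  have PtC: "Pt \<in> carrier_mat (Q+1) Q" using dPt by auto
  note Sp = mat_inv_props[OF S Sinv, folded Si_def]
  have SiC: "Si \<in> carrier_mat Q Q" and SSi: "S * Si = 1\<^sub>m Q" using Sp by auto
  have Die: "Di = diagm Q (\<lambda>i. 1 / x $ (i+1))"
    unfolding Di_def
  proof (rule mat_inv_unique)
    show "diagm Q (\<lambda>i. x $ (i+1)) * diagm Q (\<lambda>i. 1 / x $ (i+1)) = 1\<^sub>m Q"
      by (subst diagm_mult_left) (auto simp: diagm_index xnz intro!: eq_matI)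
    show "diagm Q (\<lambda>i. 1 / x $ (i+1)) * diagm Q (\<lambda>i. x $ (i+1)) = 1\<^sub>m Q"
      by (subst diagm_mult_left) (auto simp: diagm_index xnz intro!: eq_matI)
  qed simp_all
  define XP where "XP = Xt * Pt"
  have XPe: "XP = mat (Q+1) Q (\<lambda>(i,q). x$i * P$$(i,q))"
    unfolding XP_def Xt_def by (subst diagm_mult_left) (auto simp: dPt Pte intro!: eq_matI)
  have dXP: "dim_row XP = Q+1" "dim_col XP = Q" using XPe by auto
  have dXt: "dim_row Xt = Q+1" "dim_col Xt = Q+1" unfolding Xt_def by simp_all
  have dS: "dim_row S = Q" "dim_col S = Q" using S by auto
  have dSi: "dim_row Si = Q" "dim_col Si = Q" using SiC by auto
  have cD1: "card {i. i < (Q+1)*Q \<and> i \<in> (UNIV::nat set)} = (Q+1)*Q" by simp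
  have cD2: "{j. j < Q+1 \<and> j \<in> {1..<Q+1}} = {1..<Q+1}" by auto
  have dDsub: "dim_row Dsub = Q*(Q+1)" "dim_col Dsub = Q"
    unfolding Dsub_def dim_submatrix Dmat_dims dPt cD2 by (simp_all add: mult.commute)
  have Dsube: "Dsub $$ (k,j) = Dmat Pt $$ (k, j+1)" if "k < Q*(Q+1)" "j < Q" for k j
  proof -
    have "Dsub $$ (k,j) = Dmat Pt $$ (pick UNIV k, pick {1..<Q+1} j)"
      unfolding Dsub_def by (rule submatrix_index) (use that dPt cD2 in \<open>simp_all add: mult.commute\<close>)
    moreover have "pick {1..<Q+1} j = j + 1" using pick_interval[of j "Q+1" 1] that by simp
    ultimately show ?thesis by (simp add: pick_UNIV)
  qed
  define E1 where "E1 = kron S Xt * Dsub"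
  have dE1: "dim_row E1 = Q*(Q+1)" "dim_col E1 = Q" unfolding E1_def using dS dXt dDsub by simp_all
  have E1e: "E1 $$ (s,j) = (if s mod (Q+1) = j+1 then x$(j+1) * Tm Q S P (s div (Q+1)) (j+1) else 0)"
    if s: "s < Q*(Q+1)" and j: "j < Q" for s j
  proof -
    have "E1 $$ (s,j) = (\<Sum>k<Q*(Q+1). kron S Xt $$ (s,k) * Dsub $$ (k,j))"
      unfolding E1_def using s j dS dXt dDsub by (subst mult_entry) simp_all
    also have "\<dots> = (\<Sum>k<Q*(Q+1). kron S Xt $$ (s,k) * Dmat Pt $$ (k,j+1))"
      using j by (intro sum.cong refl) (simp add: Dsube)
    also have "\<dots> = (kron S Xt * Dmat Pt) $$ (s, j+1)"
      using s j dS dXt dPt by (subst mult_entry) (simp_all add: mult.commute)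
    also have "\<dots> = (if s mod (Q+1) = j+1 then x$(j+1) * (\<Sum>u<Q. S$$(s div (Q+1), u) * Pt$$(j+1,u)) else 0)"
      unfolding Xt_def using kron_diag_Dmat[OF S PtC s, of "j+1" "\<lambda>i. x $ i"] j by simp
    also have "(\<Sum>u<Q. S$$(s div (Q+1), u) * Pt$$(j+1,u)) = Tm Q S P (s div (Q+1)) (j+1)"
      unfolding Tm_def using j by (intro sum.cong refl) (simp add: Pte)
    finally show ?thesis .
  qed
  have XtC: "Xt \<in> carrier_mat (Q+1) (Q+1)" unfolding Xt_def by simp
  have XPC: "XP \<in> carrier_mat (Q+1) Q" using dXP by auto
  have st1: "kron S (1\<^sub>m (Q+1)) * kron (1\<^sub>m Q) Xt = kron S Xt"
  proof -
    have "kron S (1\<^sub>m (Q+1)) * kron (1\<^sub>m Q) Xt = kron (S * 1\<^sub>m Q) (1\<^sub>m (Q+1) * Xt)"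
      by (rule kron_mult) (simp_all add: dS dXt)
    also have "S * 1\<^sub>m Q = S" by (rule right_mult_one_mat[OF S])
    also have "1\<^sub>m (Q+1) * Xt = Xt" by (rule left_mult_one_mat[OF XtC])
    finally show ?thesis .
  qed
  have st2: "kron S Xt * hcat (kron (1\<^sub>m Q) Pt) Dsub = hcat (kron S XP) E1"
  proof -
    have "kron S Xt * hcat (kron (1\<^sub>m Q) Pt) Dsub = hcat (kron S Xt * kron (1\<^sub>m Q) Pt) E1"
      unfolding E1_def by (rule hcat_mult_left) (simp_all add: dS dXt dPt dDsub)
    moreover have "kron S Xt * kron (1\<^sub>m Q) Pt = kron (S * 1\<^sub>m Q) (Xt * Pt)"
      by (rule kron_mult) (simp_all add: dS dXt dPt)
    moreover have "S * 1\<^sub>m Q = S" by (rule right_mult_one_mat[OF S])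
    ultimately show ?thesis unfolding XP_def by simp
  qed
  have st3: "hcat (kron S XP) E1 * bdiag (kron Si (1\<^sub>m Q)) (1\<^sub>m Q) = hcat (kron (1\<^sub>m Q) XP) E1"
  proof -
    have h1: "hcat (kron S XP) E1 * bdiag (kron Si (1\<^sub>m Q)) (1\<^sub>m Q) = hcat (kron S XP * kron Si (1\<^sub>m Q)) (E1 * 1\<^sub>m Q)"
      by (rule hcat_mult_bdiag) (simp_all only: kron_dims dS dSi dXP dE1 index_one_mat)
    have h2: "kron S XP * kron Si (1\<^sub>m Q) = kron (S * Si) (XP * 1\<^sub>m Q)"
      by (rule kron_mult) (simp_all only: dS dSi dXP index_one_mat)
    have h3: "XP * 1\<^sub>m Q = XP" by (rule right_mult_one_mat[OF XPC])
    have E1C: "E1 \<in> carrier_mat (Q*(Q+1)) Q" by (rule carrier_matI[OF dE1])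
    have h4: "E1 * 1\<^sub>m Q = E1" by (rule right_mult_one_mat[OF E1C])
    show ?thesis by (simp only: h1 h2 h3 h4 SSi)
  qed
  have st4: "hcat (kron (1\<^sub>m Q) XP) E1 * bdiag (1\<^sub>m (Q^2)) Di = hcat (kron (1\<^sub>m Q) XP) (E1 * Di)"
  proof -
    have QQ: "Q^2 = Q*Q" by (simp add: power2_eq_square)
    have dDi: "dim_row Di = Q" using Die by simp
    have h1: "hcat (kron (1\<^sub>m Q) XP) E1 * bdiag (1\<^sub>m (Q*Q)) Di = hcat (kron (1\<^sub>m Q) XP * 1\<^sub>m (Q*Q)) (E1 * Di)"
      by (rule hcat_mult_bdiag) (simp_all only: kron_dims dXP dE1 dDi index_one_mat)
    have KC: "kron (1\<^sub>m Q) XP \<in> carrier_mat (Q*(Q+1)) (Q*Q)" by (rule carrier_matI) (simp_all add: dXP)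
    have h2: "kron (1\<^sub>m Q) XP * 1\<^sub>m (Q*Q) = kron (1\<^sub>m Q) XP" by (rule right_mult_one_mat[OF KC])
    show ?thesis by (simp only: QQ h1 h2)
  qed
  have st5: "hcat (kron (1\<^sub>m Q) XP) (E1 * Di) = Ared Q x P S"
  proof (rule eq_matI)
    fix s c assume s: "s < dim_row (Ared Q x P S)" and c: "c < dim_col (Ared Q x P S)"
    have s': "s < Q*(Q+1)" and c': "c < Q*Q+Q" using s c by (auto simp: Ared_def algebra_simps)
    have sd: "s div (Q+1) < Q" using s' by (simp add: less_mult_imp_div_less)
    have sm: "s mod (Q+1) < Q+1" by simp
    show "hcat (kron (1\<^sub>m Q) XP) (E1 * Di) $$ (s,c) = Ared Q x P S $$ (s,c)"
    proof (cases "c < Q*Q")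
      case True
      have cd: "c div Q < Q" using True by (simp add: less_mult_imp_div_less)
      have cm: "c mod Q < Q" using Q0 by simp
      show ?thesis using True s' c' sd sm cd cm dXP dE1
        by (simp add: hcat_index kron_index XPe Ared_def Die mult_diagm_right)
    next
      case False
      define j where "j = c - Q*Q"
      have j: "j < Q" "c = Q*Q + j" using False c' j_def by auto
      have xj: "x $ (j+1) \<noteq> 0" using xnz j by simp
      have "hcat (kron (1\<^sub>m Q) XP) (E1 * Di) $$ (s,c) = (E1 * Di) $$ (s, j)"
        using s' c' False dXP dE1 j by (simp add: hcat_index Die mult_diagm_right)
      also have "\<dots> = E1 $$ (s,j) * (1 / x $ (j+1))"
        using s' j dE1 by (simp add: Die mult_diagm_right)
      also have "\<dots> = (if s mod (Q+1) = j+1 then Tm Q S P (s div (Q+1)) (j+1) else 0)"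
        using E1e[OF s' j(1)] xj by simp
      also have "\<dots> = Ared Q x P S $$ (s,c)"
        using s' c' j False by (auto simp: Ared_def)
      finally show ?thesis .
    qed
  qed (simp_all add: Ared_def dXP dE1 Die algebra_simps)
  show ?thesis
    unfolding Pt_def[symmetric] Xt_def[symmetric] Si_def[symmetric] Dsub_def[symmetric] Di_def[symmetric]
    unfolding st1 st2 st3 st4 st5 ..
qed


lemma inv_diagm:
  assumes "\<And>i. i < n \<Longrightarrow> d i \<noteq> (0::complex)"
  shows "mat_inv (diagm n d) = diagm n (\<lambda>i. 1 / d i)"
proof (rule mat_inv_unique)
  show "diagm n d * diagm n (\<lambda>i. 1 / d i) = 1\<^sub>m n"
    by (subst diagm_mult_left) (auto simp: diagm_index assms intro!: eq_matI)
  show "diagm n (\<lambda>i. 1 / d i) * diagm n d = 1\<^sub>m n"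
    by (subst diagm_mult_left) (auto simp: diagm_index assms intro!: eq_matI)
qed simp_all

theorem mainTheorem5:
  fixes N Q :: nat and P S :: "complex mat" and x :: "complex vec"
  assumes "N \<ge> 2" and "1 \<le> Q" and "Q < N"
    and "P \<in> carrier_mat N Q"
    and "x \<in> carrier_vec N"
    and "\<And>i. 1 \<le> i \<Longrightarrow> i \<le> Q \<Longrightarrow> x $ i \<noteq> 0"
    and "S \<in> carrier_mat Q Q" and "invertible_mat S"
  shows
    "(let X = diagm N (\<lambda>i. x $ i);
          J = {0..<N} \<union> (\<Union>m\<in>{2..Q}. {(m-1)*N ..< (m-1)*N + Q + 1});
          Pt = submatrix P {0..<Q+1} UNIV;
          Xt = diagm (Q+1) (\<lambda>i. x $ i);
          M1 = kron (1\<^sub>m Q) Xt;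
          M2 = kron S (1\<^sub>m (Q+1));
          M3 = hcat (kron (1\<^sub>m Q) Pt) (submatrix (Dmat Pt) UNIV {1..<Q+1});
          M4 = bdiag (kron (mat_inv S) (1\<^sub>m Q)) (1\<^sub>m Q);
          M5 = bdiag (1\<^sub>m (Q^2)) (mat_inv (diagm Q (\<lambda>i. x $ (i+1))))
      in cmod (det (hcat (submatrix (kron (1\<^sub>m Q) (X * P)) J UNIV)
                         (submatrix (kron S (1\<^sub>m N) * Dmat P) J {1..<N})))
         = (\<Prod>j\<in>{Q+1..<N}. cmod (\<Sum>q<Q. S $$ (0,q) * P $$ (j,q)))
           * (cmod (det M1) * cmod (det M2) * cmod (det M3) * cmod (det M4) * cmod (det M5)))"
proof -
  note N2 = assms(1) and Q1 = assms(2) and QN = assms(3) and P = assms(4)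
    and xnz = assms(6) and S = assms(7) and Sinv = assms(8)
  define Pt where "Pt = submatrix P {0..<Q+1} UNIV"
  define Xt where "Xt = diagm (Q+1) (\<lambda>i. x $ i)"
  define M1 where "M1 = kron (1\<^sub>m Q) Xt"
  define M2 where "M2 = kron S (1\<^sub>m (Q+1))"
  define M3 where "M3 = hcat (kron (1\<^sub>m Q) Pt) (submatrix (Dmat Pt) UNIV {1..<Q+1})"
  define M4 where "M4 = bdiag (kron (mat_inv S) (1\<^sub>m Q)) (1\<^sub>m Q)"
  define M5 where "M5 = bdiag (1\<^sub>m (Q^2)) (mat_inv (diagm Q (\<lambda>i. x $ (i+1))))"
  define n2 where "n2 = Q*(Q+1)"
  have dP: "dim_row P = N" "dim_col P = Q" using P by auto
  have cPt1: "{i. i < N \<and> i \<in> {0..<Q+1}} = {0..<Q+1}" using QN by auto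
  have dPt: "dim_row Pt = Q+1" "dim_col Pt = Q" unfolding Pt_def dim_submatrix dP cPt1 by simp_all
  have cD2: "{j. j < Q+1 \<and> j \<in> {1..<Q+1}} = {1..<Q+1}" by auto
  have dS: "dim_row S = Q" "dim_col S = Q" using S by auto
  have SiC: "mat_inv S \<in> carrier_mat Q Q" using mat_inv_props[OF S Sinv] by simp
  have Di: "mat_inv (diagm Q (\<lambda>i. x $ (i+1))) = diagm Q (\<lambda>i. 1 / x $ (i+1))"
    by (rule inv_diagm) (use xnz in simp)
  have C1: "M1 \<in> carrier_mat n2 n2" unfolding M1_def Xt_def n2_def by (rule carrier_matI) simp_all
  have C2: "M2 \<in> carrier_mat n2 n2" unfolding M2_def n2_def by (rule carrier_matI) (simp_all add: dS)
  have "dim_col (submatrix (Dmat Pt) UNIV {1..<Q+1}) = card {j. j < dim_col (Dmat Pt) \<and> j \<in> {1..<Q+1}}"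
    by (rule dim_submatrix(2))
  also have "\<dots> = card {j. j < Q+1 \<and> j \<in> {1..<Q+1}}" by (simp only: Dmat_dims dPt)
  also have "\<dots> = Q" unfolding cD2 by simp
  finally have dDs: "dim_col (submatrix (Dmat Pt) UNIV {1..<Q+1}) = Q" .
  have C3: "M3 \<in> carrier_mat n2 n2" unfolding M3_def n2_def
    by (rule carrier_matI) (simp_all only: hcat_dims kron_dims index_one_mat dPt dDs, simp_all add: algebra_simps)
  have dSi: "dim_row (mat_inv S) = Q" "dim_col (mat_inv S) = Q" using SiC by auto
  have C4: "M4 \<in> carrier_mat n2 n2" unfolding M4_def n2_def
    by (rule carrier_matI) (simp_all add: dSi algebra_simps)
  have C5: "M5 \<in> carrier_mat n2 n2" unfolding M5_def n2_def Di
    by (rule carrier_matI) (simp_all add: algebra_simps power2_eq_square)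
  have B: "M2 * M1 * M3 * M4 * M5 = Ared Q x P S"
    unfolding M1_def M2_def M3_def M4_def M5_def Pt_def Xt_def by (rule partB[OF Q1 QN P xnz S Sinv])
  have C21: "M2 * M1 \<in> carrier_mat n2 n2" using C1 C2 by simp
  have C213: "M2 * M1 * M3 \<in> carrier_mat n2 n2" using C21 C3 by simp
  have C2134: "M2 * M1 * M3 * M4 \<in> carrier_mat n2 n2" using C213 C4 by simp
  have "det (Ared Q x P S) = det (M2 * M1 * M3 * M4) * det M5" unfolding B[symmetric] by (rule det_mult[OF C2134 C5])
  also have "det (M2 * M1 * M3 * M4) = det (M2 * M1 * M3) * det M4" by (rule det_mult[OF C213 C4])
  also have "det (M2 * M1 * M3) = det (M2 * M1) * det M3" by (rule det_mult[OF C21 C3])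
  also have "det (M2 * M1) = det M2 * det M1" by (rule det_mult[OF C2 C1])
  finally have dA: "det (Ared Q x P S) = det M2 * det M1 * det M3 * det M4 * det M5" .
  have A: "cmod (det (hcat (submatrix (kron (1\<^sub>m Q) (diagm N (\<lambda>i. x $ i) * P)) ({0..<N} \<union> (\<Union>m\<in>{2..Q}. {(m-1)*N ..< (m-1)*N + Q + 1})) UNIV)
                         (submatrix (kron S (1\<^sub>m N) * Dmat P) ({0..<N} \<union> (\<Union>m\<in>{2..Q}. {(m-1)*N ..< (m-1)*N + Q + 1})) {1..<N})))
    = (\<Prod>j\<in>{Q+1..<N}. cmod (Tm Q S P 0 j)) * cmod (det (Ared Q x P S))"
    using partA[OF N2 Q1 QN P S, of x] unfolding Jset_def .
  have fin: "cmod (det (Ared Q x P S)) = cmod (det M1) * cmod (det M2) * cmod (det M3) * cmod (det M4) * cmod (det M5)"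
    unfolding dA by (simp add: norm_mult ac_simps)
  note A' = A[unfolded Tm_def]
  note fin' = fin[unfolded M1_def M2_def M3_def M4_def M5_def Pt_def Xt_def]
  show ?thesis unfolding Let_def by (simp only: A' fin')
qed

end
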